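(* Let $n\ge 1$ and let $0 \leq m \leq n-1$ be an integer. Then there exist a real normed space $X$ with $\dim X=n$ and a linear subspace $Y\subseteq X$ with $\dim Y=n-1$ such that $\dim \mathcal{P}_{\min}(X, Y)=m$. Moreover, if $0 \leq m \leq n-3$, then $X$ and $Y$ can be chosen so that in addition $\lambda(Y, X) > 1$.
   Context: A projection onto $Y$ is a linear $P:X\to Y$ with $P|_Y=\mathrm{id}_Y$; $\lambda(Y,X)$ is the infimum of the operator norms of such projections and $\mathcal{P}_{\min}(X,Y)$ is the set of projections of norm $\lambda(Y,X)$. $\dim \mathcal{P}_{\min}(X,Y)$ is the affine dimension of this convex subset of the space $\mathcal{L}(X,X)$ of linear operators on $X$ (the smallest dimension of an affine subspace containing it). *)

theory Defs
  imports "HOL-Analysis.Analysis"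
begin

text \<open>A finite-dimensional real normed space of dimension n is modelled (up to
isometric isomorphism) as real^'n with CARD('n) = n equipped with an arbitrary norm N.
Linear operators on X are represented by their matrices (real^'n^'n, acting via *v),
so that the space L(X,X) is a Euclidean space and affine dimension is aff_dim.\<close>

definition is_norm :: "('a::real_vector \<Rightarrow> real) \<Rightarrow> bool" where
  "is_norm N \<longleftrightarrow>
     (\<forall>x. 0 \<le> N x) \<and> (\<forall>x. N x = 0 \<longleftrightarrow> x = 0) \<and>
     (\<forall>c x. N (c *\<^sub>R x) = \<bar>c\<bar> * N x) \<and> (\<forall>x y. N (x + y) \<le> N x + N y)"

definition op_norm :: "((real^'n) \<Rightarrow> real) \<Rightarrow> real^'n^'n \<Rightarrow> real" where
  "op_norm N A = Sup {N (A *v x) | x. N x \<le> 1}"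

definition is_projection :: "(real^'n) set \<Rightarrow> real^'n^'n \<Rightarrow> bool" where
  "is_projection Y A \<longleftrightarrow> (\<forall>x. A *v x \<in> Y) \<and> (\<forall>y\<in>Y. A *v y = y)"

definition proj_const :: "((real^'n) \<Rightarrow> real) \<Rightarrow> (real^'n) set \<Rightarrow> real" where
  "proj_const N Y = Inf {op_norm N A | A. is_projection Y A}"

definition Pmin :: "((real^'n) \<Rightarrow> real) \<Rightarrow> (real^'n) set \<Rightarrow> (real^'n^'n) set" where
  "Pmin N Y = {A. is_projection Y A \<and> op_norm N A = proj_const N Y}"

end

theory Submission
  imports Defs
begin

definition linf :: "real^'n \<Rightarrow> real" where "linf x = Max (range (\<lambda>i. \<bar>x$i\<bar>))"
definition Nv :: "'n set \<Rightarrow> real^'n \<Rightarrow> real" where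
  "Nv V x = max (\<Sum>i\<in>V. \<bar>x$i\<bar>) (linf x)"

lemma linf_ge: "\<bar>x$i\<bar> \<le> linf x"
  unfolding linf_def by (rule Max_ge) auto

lemma linf_le: "(\<And>i. \<bar>x$i\<bar> \<le> c) \<Longrightarrow> linf x \<le> c"
  unfolding linf_def by (rule Max.boundedI) auto

lemma linf_in: "\<exists>i. linf x = \<bar>x$i\<bar>"
proof -
  have "linf x \<in> range (\<lambda>i. \<bar>x$i\<bar>)" unfolding linf_def by (rule Max_in) auto
  then show ?thesis by auto
qed

lemma Nv_ge: "\<bar>x$i\<bar> \<le> Nv V x"
  unfolding Nv_def using linf_ge[of x i] by linarith

lemma Nv_ge_sum: "(\<Sum>i\<in>V. \<bar>x$i\<bar>) \<le> Nv V x"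
  unfolding Nv_def by linarith

lemma Nv_le: "(\<Sum>i\<in>V. \<bar>x$i\<bar>) \<le> c \<Longrightarrow> (\<And>i. \<bar>x$i\<bar> \<le> c) \<Longrightarrow> Nv V x \<le> c"
  unfolding Nv_def using linf_le[of x c] by simp

lemma Nv_nonneg: "0 \<le> Nv V x"
  using Nv_ge[of x _ V] by (meson abs_ge_zero order_trans)

lemma Nv_zero: "Nv V 0 = 0"
  using Nv_nonneg[of V 0] by (intro antisym Nv_le) simp_all

lemma Nv_norm: fixes V :: "'n::finite set" shows "is_norm (Nv V)"
  unfolding is_norm_def
proof (intro conjI allI)
  fix x :: "real^'n::finite"
  show "0 \<le> Nv V x" using Nv_ge[of x _ V] by (meson abs_ge_zero order_trans)
  show "Nv V x = 0 \<longleftrightarrow> x = 0"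
  proof
    assume h: "Nv V x = 0"
    show "x = 0"
    proof (rule vec_eq_iff[THEN iffD2, rule_format])
      fix i show "x$i = 0$i" using Nv_ge[of x i V] h by simp
    qed
  next
    assume "x = 0" then show "Nv V x = 0"
      using \<open>0 \<le> Nv V x\<close> by (intro antisym Nv_le) simp_all
  qed
next
  fix c and x :: "real^'n"
  have le: "Nv V (d *\<^sub>R y) \<le> \<bar>d\<bar> * Nv V y" for d and y :: "real^'n"
  proof (rule Nv_le)
    show "(\<Sum>i\<in>V. \<bar>(d *\<^sub>R y) $ i\<bar>) \<le> \<bar>d\<bar> * Nv V y"
      using Nv_ge_sum[of y V] by (simp add: abs_mult sum_distrib_left[symmetric] mult_left_mono)
    show "\<bar>(d *\<^sub>R y) $ i\<bar> \<le> \<bar>d\<bar> * Nv V y" for i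
      using Nv_ge[of y i V] by (simp add: abs_mult mult_left_mono)
  qed
  show "Nv V (c *\<^sub>R x) = \<bar>c\<bar> * Nv V x"
  proof (cases "c = 0")
    case True then show ?thesis by (simp add: Nv_zero)
  next
    case False
    have "Nv V x = Nv V (inverse c *\<^sub>R (c *\<^sub>R x))" using False by simp
    also have "\<dots> \<le> \<bar>inverse c\<bar> * Nv V (c *\<^sub>R x)" by (rule le)
    finally have "\<bar>c\<bar> * Nv V x \<le> Nv V (c *\<^sub>R x)" using False
      by (simp add: field_simps abs_inverse divide_simps)
    then show ?thesis using le[of c x] by linarith
  qed
next
  fix x y :: "real^'n"
  show "Nv V (x + y) \<le> Nv V x + Nv V y"
  proof (rule Nv_le)
    have "(\<Sum>i\<in>V. \<bar>(x + y) $ i\<bar>) \<le> (\<Sum>i\<in>V. \<bar>x $ i\<bar> + \<bar>y$i\<bar>)"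
      by (rule sum_mono) simp
    also have "\<dots> \<le> Nv V x + Nv V y" using Nv_ge_sum[of x V] Nv_ge_sum[of y V]
      by (simp add: sum.distrib)
    finally show "(\<Sum>i\<in>V. \<bar>(x + y) $ i\<bar>) \<le> Nv V x + Nv V y" .
    show "\<bar>(x + y) $ i\<bar> \<le> Nv V x + Nv V y" for i
      using Nv_ge[of x i V] Nv_ge[of y i V] by simp
  qed
qed

definition Pz :: "real^'n \<Rightarrow> real^'n \<Rightarrow> real^'n^'n" where
  "Pz a z = (\<chi> i j. (if i = j then 1 else 0) - z$i * a$j)"

lemma Pz_mult: "Pz a z *v x = x - (a \<bullet> x) *\<^sub>R z"
proof -
  have "(Pz a z *v x) $ i = (x - (a \<bullet> x) *\<^sub>R z) $ i" for i
  proof -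
    have "(Pz a z *v x) $ i = (\<Sum>j\<in>UNIV. (if i = j then x$j else 0) - z$i * (a$j * x$j))"
      unfolding Pz_def matrix_vector_mult_def by (auto simp: algebra_simps intro!: sum.cong)
    also have "\<dots> = x$i - z$i * (\<Sum>j\<in>UNIV. a$j * x$j)"
      by (simp add: sum_subtractf sum_distrib_left)
    also have "\<dots> = (x - (a \<bullet> x) *\<^sub>R z) $ i"
      by (simp add: inner_vec_def)
    finally show ?thesis .
  qed
  then show ?thesis by (simp add: vec_eq_iff)
qed

lemma proj_iff:
  fixes a :: "real^'n"
  assumes a: "a \<noteq> 0"
  shows "is_projection {x. a \<bullet> x = 0} A \<longleftrightarrow> (\<exists>z. a \<bullet> z = 1 \<and> A = Pz a z)"
proof
  assume P: "is_projection {x. a \<bullet> x = 0} A"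
  define e where "e = (1 / (a \<bullet> a)) *\<^sub>R a"
  have ae: "a \<bullet> e = 1" using a by (simp add: e_def)
  define z where "z = e - A *v e"
  have Ae: "a \<bullet> (A *v e) = 0" using P unfolding is_projection_def by auto
  have az: "a \<bullet> z = 1" using ae Ae by (simp add: z_def inner_diff_right)
  have "A *v x = Pz a z *v x" for x
  proof -
    have "x - (a \<bullet> x) *\<^sub>R e \<in> {x. a \<bullet> x = 0}" using ae by (simp add: inner_diff_right)
    then have "A *v (x - (a \<bullet> x) *\<^sub>R e) = x - (a \<bullet> x) *\<^sub>R e"
      using P unfolding is_projection_def by blast
    then have "A *v x - (a \<bullet> x) *\<^sub>R (A *v e) = x - (a \<bullet> x) *\<^sub>R e"
      by (simp add: matrix_vector_mult_diff_distrib matrix_vector_mult_scaleR)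
    then show ?thesis unfolding Pz_mult z_def by (simp add: algebra_simps)
  qed
  then have "A = Pz a z" by (simp add: matrix_eq)
  then show "\<exists>z. a \<bullet> z = 1 \<and> A = Pz a z" using az by blast
next
  assume "\<exists>z. a \<bullet> z = 1 \<and> A = Pz a z"
  then obtain z where az: "a \<bullet> z = 1" and A: "A = Pz a z" by blast
  show "is_projection {x. a \<bullet> x = 0} A"
    unfolding is_projection_def A Pz_mult using az by (simp add: inner_diff_right)
qed

lemma op_norm_le:
  assumes N: "is_norm N" and h: "\<And>x. N x \<le> 1 \<Longrightarrow> N (A *v x) \<le> c"
  shows "op_norm N A \<le> c"
proof -
  have "N 0 = 0" using N unfolding is_norm_def by blast
  then have "N (A *v 0) \<in> {N (A *v x) | x. N x \<le> 1}" by (intro CollectI exI[of _ 0]) simp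
  then show ?thesis unfolding op_norm_def using h by (intro cSup_least) (auto simp: matrix_vector_mult_0_right)
qed

lemma op_norm_ge:
  assumes b: "\<exists>C. \<forall>x. N x \<le> 1 \<longrightarrow> N (A *v x) \<le> C" and x: "N x \<le> 1"
  shows "N (A *v x) \<le> op_norm N A"
proof -
  have "bdd_above {N (A *v x) | x. N x \<le> 1}" using b by (auto intro: bdd_aboveI)
  then show ?thesis unfolding op_norm_def using x by (intro cSup_upper) auto
qed

lemma aff_dim_Pz:
  fixes a :: "real^'n" assumes a: "a \<noteq> 0"
  shows "aff_dim (Pz a ` M) = aff_dim M"
proof -
  define L where "L = (\<lambda>z::real^'n. - (\<chi> i j. z$i * a$j))"
  have PL: "Pz a = (\<lambda>z. mat 1 + L z)"
    by (rule ext) (simp add: Pz_def L_def mat_def vec_eq_iff)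
  have lin: "linear L"
    by (rule linearI) (simp_all add: L_def vec_eq_iff algebra_simps)
  obtain j where j: "a$j \<noteq> 0" using a by (auto simp: vec_eq_iff)
  have inj: "inj L"
  proof (rule injI)
    fix z w assume "L z = L w"
    then have "\<forall>i. z$i * a$j = w$i * a$j" by (auto simp: L_def vec_eq_iff)
    then show "z = w" using j by (simp add: vec_eq_iff)
  qed
  have "Pz a ` M = (+) (mat 1) ` (L ` M)" unfolding PL by auto
  moreover have "aff_dim ((+) (mat 1) ` (L ` M)) = aff_dim (L ` M)" by (rule aff_dim_translation_eq)
  ultimately show ?thesis using aff_dim_injective_linear_image[OF lin inj] by simp
qed

lemma framework:
  fixes a :: "real^'n" and N :: "real^'n \<Rightarrow> real" and M :: "(real^'n) set"
  assumes N: "is_norm N" and a: "a \<noteq> 0"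
  and bdd: "\<And>z. \<exists>C. \<forall>x. N x \<le> 1 \<longrightarrow> N (x - (a \<bullet> x) *\<^sub>R z) \<le> C"
  and Msub: "\<And>z. z \<in> M \<Longrightarrow> a \<bullet> z = 1" and z0: "z0 \<in> M"
  and i: "\<And>z x. z \<in> M \<Longrightarrow> N x \<le> 1 \<Longrightarrow> N (x - (a \<bullet> x) *\<^sub>R z) \<le> l"
  and ii: "\<And>z. a \<bullet> z = 1 \<Longrightarrow> \<exists>x. N x \<le> 1 \<and> l \<le> N (x - (a \<bullet> x) *\<^sub>R z)"
  and iii: "\<And>z. a \<bullet> z = 1 \<Longrightarrow> z \<notin> M \<Longrightarrow> \<exists>x. N x \<le> 1 \<and> l < N (x - (a \<bullet> x) *\<^sub>R z)"
  shows "proj_const N {x. a \<bullet> x = 0} = l \<and> aff_dim (Pmin N {x. a \<bullet> x = 0}) = aff_dim M"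
proof -
  have b: "\<exists>C. \<forall>x. N x \<le> 1 \<longrightarrow> N (Pz a z *v x) \<le> C" for z
    using bdd[of z] by (simp add: Pz_mult)
  have ge: "l \<le> op_norm N (Pz a z)" if az: "a \<bullet> z = 1" for z
  proof -
    obtain x where "N x \<le> 1" "l \<le> N (x - (a \<bullet> x) *\<^sub>R z)" using ii[OF az] by blast
    then show ?thesis using op_norm_ge[OF b, of x z] by (simp add: Pz_mult)
  qed
  have gt: "l < op_norm N (Pz a z)" if az: "a \<bullet> z = 1" "z \<notin> M" for z
  proof -
    obtain x where "N x \<le> 1" "l < N (x - (a \<bullet> x) *\<^sub>R z)" using iii[OF az] by blast
    then show ?thesis using op_norm_ge[OF b, of x z] by (simp add: Pz_mult)
  qed
  have eq: "op_norm N (Pz a z) = l" if "z \<in> M" for z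
  proof (rule antisym)
    show "op_norm N (Pz a z) \<le> l" using i[OF that] by (intro op_norm_le[OF N]) (simp add: Pz_mult)
    show "l \<le> op_norm N (Pz a z)" using ge Msub[OF that] by blast
  qed
  have S: "{op_norm N A | A. is_projection {x. a \<bullet> x = 0} A} = {op_norm N (Pz a z) | z. a \<bullet> z = 1}"
    unfolding proj_iff[OF a] by auto
  have pc: "proj_const N {x. a \<bullet> x = 0} = l"
    unfolding proj_const_def S
  proof (rule cInf_eq_minimum)
    show "l \<in> {op_norm N (Pz a z) | z. a \<bullet> z = 1}" using eq[OF z0] Msub[OF z0] by force
    show "\<And>y. y \<in> {op_norm N (Pz a z) | z. a \<bullet> z = 1} \<Longrightarrow> l \<le> y" using ge by blast
  qed
  have "Pmin N {x. a \<bullet> x = 0} = Pz a ` M"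
  proof (rule set_eqI)
    fix A
    show "A \<in> Pmin N {x. a \<bullet> x = 0} \<longleftrightarrow> A \<in> Pz a ` M"
      unfolding Pmin_def pc mem_Collect_eq proj_iff[OF a]
      using eq gt Msub by (metis image_iff less_irrefl)
  qed
  then show ?thesis using pc aff_dim_Pz[OF a] by simp
qed



lemma aff_dim_box:
  fixes M :: "(real^'n) set" and K :: "'n set" and c :: real
  assumes z0: "z0 \<in> M" and fx: "\<And>z i. z \<in> M \<Longrightarrow> i \<in> K \<Longrightarrow> z$i = z0$i"
  and free: "\<And>j. j \<notin> K \<Longrightarrow> z0 + c *\<^sub>R axis j 1 \<in> M" and c: "c \<noteq> 0"
  shows "aff_dim M = int (card (-K))"
proof -
  define S where "S = (+) (-z0) ` M"
  define E where "E = {x::real^'n. \<forall>i. i \<notin> (-K) \<longrightarrow> x$i = 0}"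
  have "aff_dim M = int (dim S)" unfolding S_def
    by (rule aff_dim_eq_dim) (use z0 hull_subset[of M affine] in blast)
  have subE: "subspace E" unfolding E_def
    using subspace_substandard_cart[where 'a=real, of "\<lambda>i. i \<notin> (-K)"] by (simp add: subspace_vec_eq)
  have dimE: "dim E = card (-K)" unfolding E_def using dim_substandard_cart[where 'a=real, of "-K"]
    by (simp add: dim_vec_eq)
  have SE: "S \<subseteq> E" unfolding S_def E_def using fx by auto
  have ES: "E \<subseteq> span S"
  proof
    fix x assume x: "x \<in> E"
    have ax: "x$i *\<^sub>R axis i 1 \<in> span S" for i
    proof (cases "i \<in> K")
      case True then have "x$i = 0" using x unfolding E_def by auto
      then show ?thesis by (simp add: span_zero)
    next
      case False
      have "c *\<^sub>R axis i 1 \<in> S" unfolding S_def using free[OF False]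
        by (intro image_eqI[where x="z0 + c *\<^sub>R axis i 1"]) auto
      then have "(x$i / c) *\<^sub>R (c *\<^sub>R axis i 1) \<in> span S"
        by (intro span_mul span_base)
      then show ?thesis using c by simp
    qed
    then have "(\<Sum>i\<in>UNIV. x$i *\<^sub>R axis i 1) \<in> span S" by (rule span_sum)
    moreover have "(\<Sum>i\<in>UNIV. x$i *\<^sub>R axis i 1) = x"
      using basis_expansion[of x] by (simp add: scalar_mult_eq_scaleR)
    ultimately show "x \<in> span S" by simp
  qed
  have "span S = E" using span_minimal[OF SE subE] ES by blast
  then have "dim S = card (-K)" using dim_span[of S] dimE by simp
  then show ?thesis using \<open>aff_dim M = int (dim S)\<close> by simp
qed

lemma Nv_bdd: fixes V :: "'n::finite set" shows "\<exists>C. \<forall>x. Nv V x \<le> 1 \<longrightarrow> Nv V (x - (a \<bullet> x) *\<^sub>R z) \<le> C"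
proof (intro exI allI impI)
  fix x :: "real^'n::finite" assume x: "Nv V x \<le> 1"
  have nn: "is_norm (Nv V)" by (rule Nv_norm)
  have "\<bar>a \<bullet> x\<bar> = \<bar>\<Sum>i\<in>UNIV. a$i * x$i\<bar>" by (simp add: inner_vec_def)
  also have "\<dots> \<le> (\<Sum>i\<in>UNIV. \<bar>a$i * x$i\<bar>)" by (rule sum_abs)
  also have "\<dots> \<le> (\<Sum>i\<in>UNIV. \<bar>a$i\<bar>)"
  proof (rule sum_mono)
    fix i
    have "\<bar>x$i\<bar> \<le> 1" using Nv_ge[of x i V] x by linarith
    then show "\<bar>a$i * x$i\<bar> \<le> \<bar>a$i\<bar>" by (simp add: abs_mult mult_left_le)
  qed
  finally have ax: "\<bar>a \<bullet> x\<bar> \<le> (\<Sum>i\<in>UNIV. \<bar>a$i\<bar>)" .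
  have "Nv V (x - (a \<bullet> x) *\<^sub>R z) = Nv V (x + (- (a \<bullet> x)) *\<^sub>R z)" by simp
  also have "\<dots> \<le> Nv V x + Nv V ((- (a \<bullet> x)) *\<^sub>R z)" using nn unfolding is_norm_def by blast
  also have "\<dots> = Nv V x + \<bar>a \<bullet> x\<bar> * Nv V z"
  proof -
    have hom: "\<And>c y. Nv V (c *\<^sub>R y) = \<bar>c\<bar> * Nv V y" using nn unfolding is_norm_def by blast
    show ?thesis by (simp only: hom abs_minus_cancel)
  qed
  also have "\<dots> \<le> 1 + (\<Sum>i\<in>UNIV. \<bar>a$i\<bar>) * Nv V z"
    using x ax Nv_nonneg[of V z] by (intro add_mono mult_right_mono) auto
  finally show "Nv V (x - (a \<bullet> x) *\<^sub>R z) \<le> 1 + (\<Sum>i\<in>UNIV. \<bar>a$i\<bar>) * Nv V z" .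
qed

definition ind :: "'n set \<Rightarrow> real^'n" where "ind K = (\<chi> i. if i \<in> K then 1 else 0)"

lemma ind_inner: "ind K \<bullet> x = (\<Sum>i\<in>K. x$i)"
proof -
  have "(\<Sum>i\<in>UNIV. ind K $ i * x$i) = (\<Sum>i\<in>UNIV. if i \<in> K then x$i else 0)"
    by (rule sum.cong) (auto simp: ind_def)
  then show ?thesis by (simp add: inner_vec_def sum.If_cases)
qed

lemma N0_le1: "Nv {} x \<le> 1 \<longleftrightarrow> (\<forall>i. \<bar>x$i\<bar> \<le> 1)"
proof
  assume "Nv {} x \<le> 1" then show "\<forall>i. \<bar>x$i\<bar> \<le> 1" using Nv_ge[of x _ "{}"] order_trans by blast
next
  assume "\<forall>i. \<bar>x$i\<bar> \<le> 1" then show "Nv {} x \<le> 1" by (intro Nv_le) auto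
qed

lemma sum_abs_le_card:
  fixes x :: "real^'n"
  assumes "\<forall>i. \<bar>x$i\<bar> \<le> 1"
  shows "\<bar>\<Sum>i\<in>A. x$i\<bar> \<le> real (card A)"
proof -
  have "\<bar>\<Sum>i\<in>A. x$i\<bar> \<le> (\<Sum>i\<in>A. \<bar>x$i\<bar>)" by (rule sum_abs)
  also have "\<dots> \<le> of_nat (card A) * 1" by (rule sum_bounded_above) (use assms in auto)
  finally show ?thesis by simp
qed

lemma linf_constr:
  fixes K :: "'n::finite set"
  assumes kk: "3 \<le> card K \<or> (K = UNIV \<and> card K = 1)"
  shows "proj_const (Nv ({}::'n set)) {x. ind K \<bullet> x = 0} = 2 - 2 / real (card K)
       \<and> aff_dim (Pmin (Nv ({}::'n set)) {x. ind K \<bullet> x = 0}) = int (card (-K))"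
proof -
  define k where "k = real (card K)"
  have K1: "1 \<le> card K" using kk by auto
  have Kne: "K \<noteq> {}" using K1 by (metis card.empty not_one_le_zero)
  have kpos: "k > 0" "1 \<le> k" using K1 k_def by auto
  have k3: "3 \<le> k" if "j \<notin> K" for j using kk k_def that by auto
  define l where "l = 2 - 2/k"
  have l0: "0 \<le> l" using kpos unfolding l_def by (simp add: field_simps)
  define M where "M = {z::real^'n. (\<forall>i\<in>K. z$i = 1/k) \<and> (\<forall>i. i \<notin> K \<longrightarrow> \<bar>z$i\<bar> \<le> (k-2)/k^2)}"
  define z0 where "z0 = (\<chi> i. if i \<in> K then 1/k else (0::real))"
  have a0: "ind K \<noteq> 0"
  proof -
    obtain i where "i \<in> K" using Kne by auto
    then have "ind K $ i \<noteq> 0" by (simp add: ind_def)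
    then show ?thesis by auto
  qed
  have Msub: "ind K \<bullet> z = 1" if "z \<in> M" for z
  proof -
    have "ind K \<bullet> z = (\<Sum>i\<in>K. 1/k)" unfolding ind_inner using that M_def by (intro sum.cong) auto
    also have "\<dots> = 1" using kpos Kne by (simp add: k_def)
    finally show ?thesis .
  qed
  have z0M: "z0 \<in> M" unfolding M_def z0_def
  proof (intro CollectI conjI ballI allI impI)
    fix i assume "i \<notin> K"
    then have "3 \<le> k" by (rule k3)
    then show "\<bar>(\<chi> i. if i \<in> K then 1 / k else 0) $ i\<bar> \<le> (k - 2) / k\<^sup>2" using \<open>i \<notin> K\<close> by simp
  qed simp
  have remK: "(\<Sum>j\<in>K. f j) = f i + (\<Sum>j\<in>K-{i}. f j)" if "i \<in> K" for i and f :: "'n \<Rightarrow> real"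
    using that by (simp add: sum.remove)
  have cardrem: "real (card (K - {i})) = k - 1" if "i \<in> K" for i
    using that K1 by (simp add: k_def of_nat_diff)
  have i: "Nv {} (x - (ind K \<bullet> x) *\<^sub>R z) \<le> l" if zM: "z \<in> M" and xN: "Nv {} x \<le> 1" for z x
  proof (rule Nv_le)
    have xb: "\<forall>i. \<bar>x$i\<bar> \<le> 1" using xN N0_le1 by blast
    show "(\<Sum>i\<in>{}. \<bar>(x - (ind K \<bullet> x) *\<^sub>R z) $ i\<bar>) \<le> l" using l0 by simp
    fix i
    show "\<bar>(x - (ind K \<bullet> x) *\<^sub>R z) $ i\<bar> \<le> l"
    proof (cases "i \<in> K")
      case True
      define r where "r = (\<Sum>j\<in>K-{i}. x$j)"
      have s: "ind K \<bullet> x = x$i + r" unfolding ind_inner r_def using remK[OF True] .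
      have rb: "\<bar>r\<bar> \<le> k - 1" unfolding r_def using sum_abs_le_card[OF xb, of "K-{i}"] cardrem[OF True] by simp
      have zi: "z$i = 1/k" using zM True M_def by auto
      have eq: "(x - (ind K \<bullet> x) *\<^sub>R z) $ i = ((k-1) * x$i - r) / k"
        using kpos by (simp add: s zi field_simps)
      have "\<bar>(k-1) * x$i\<bar> \<le> k - 1" using xb kpos by (simp add: abs_mult mult_left_le)
      then have "\<bar>(k-1) * x$i - r\<bar> \<le> 2 * (k-1)" using rb abs_triangle_ineq4[of "(k-1) * x$i" r] by argo
      then have "\<bar>(k-1) * x$i - r\<bar> / k \<le> 2 * (k-1) / k" using kpos by (simp add: divide_right_mono)
      also have "2 * (k-1) / k = l" unfolding l_def using kpos by (simp add: field_simps)
      finally show ?thesis unfolding eq using kpos by simp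
    next
      case False
      have k3': "3 \<le> k" using k3[OF False] .
      have sb: "\<bar>ind K \<bullet> x\<bar> \<le> k" unfolding ind_inner k_def by (rule sum_abs_le_card[OF xb])
      have zb: "\<bar>z$i\<bar> \<le> (k-2)/k^2" using zM False M_def by auto
      have "\<bar>(ind K \<bullet> x) * z$i\<bar> \<le> k * ((k-2)/k^2)"
        unfolding abs_mult using sb zb by (intro mult_mono) auto
      also have "k * ((k-2)/k^2) = l - 1" unfolding l_def using kpos by (simp add: field_simps power2_eq_square)
      finally have "\<bar>(ind K \<bullet> x) * z$i\<bar> \<le> l - 1" .
      moreover have "\<bar>x$i\<bar> \<le> 1" using xb by auto
      ultimately show ?thesis by simp
    qed
  qed
  have x1: "Nv {} (\<chi> j. if j = i then 1 else if j \<in> K then -1 else 0) \<le> 1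
        \<and> ind K \<bullet> (\<chi> j. if j = i then 1 else if j \<in> K then -1 else 0) = 2 - k" if iK: "i \<in> K" for i
  proof
    show "Nv {} (\<chi> j. if j = i then 1 else if j \<in> K then -1 else 0) \<le> 1" unfolding N0_le1 by auto
    have "ind K \<bullet> (\<chi> j. if j = i then 1 else if j \<in> K then -1 else (0::real))
        = 1 + (\<Sum>j\<in>K-{i}. -1)"
      unfolding ind_inner remK[OF iK] by (auto intro!: sum.cong)
    also have "\<dots> = 2 - k" using cardrem[OF iK] by simp
    finally show "ind K \<bullet> (\<chi> j. if j = i then 1 else if j \<in> K then -1 else 0) = 2 - k" .
  qed
  have y1: "l \<le> Nv {} (x - (ind K \<bullet> x) *\<^sub>R z) \<and> (k \<noteq> 1 \<longrightarrow> z$i > 1/k \<longrightarrow> l < Nv {} (x - (ind K \<bullet> x) *\<^sub>R z))"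
    if iK: "i \<in> K" and az: "ind K \<bullet> z = 1" and zi: "z$i \<ge> 1/k"
    and xd: "x = (\<chi> j. if j = i then 1 else if j \<in> K then -1 else 0)" for i z x
  proof -
    have yi: "(x - (ind K \<bullet> x) *\<^sub>R z) $ i = 1 + (k - 2) * z$i"
    proof -
      have s: "ind K \<bullet> x = 2 - k" using x1[OF iK] xd by simp
      have "x$i = 1" using xd by simp
      then show ?thesis by (simp add: s algebra_simps)
    qed
    have ge: "\<bar>(x - (ind K \<bullet> x) *\<^sub>R z) $ i\<bar> \<le> Nv {} (x - (ind K \<bullet> x) *\<^sub>R z)" by (rule Nv_ge)
    show ?thesis
    proof (cases "k = 1")
      case True
      then have "card K = 1" using k_def by simp
      then have "K = {i}" using iK by (metis card_1_singletonE singletonD)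
      then have "z$i = 1" using az by (simp add: ind_inner)
      then have "l \<le> \<bar>(x - (ind K \<bullet> x) *\<^sub>R z) $ i\<bar>" using True unfolding yi l_def by simp
      then show ?thesis using ge True by linarith
    next
      case False
      then have k3': "3 \<le> k" using kk k_def by auto
      have "(k-2) * (1/k) \<le> (k-2) * z$i" using zi k3' by (intro mult_left_mono) auto
      moreover have "(k-2) * (1/k) = l - 1" unfolding l_def using kpos by (simp add: field_simps)
      ultimately have A: "l \<le> (x - (ind K \<bullet> x) *\<^sub>R z) $ i" unfolding yi by linarith
      have B: "l < (x - (ind K \<bullet> x) *\<^sub>R z) $ i" if "z$i > 1/k"
      proof -
        have "(k-2) * (1/k) < (k-2) * z$i" using that k3' by (intro mult_strict_left_mono) auto
        then show ?thesis unfolding yi using \<open>(k-2) * (1/k) = l - 1\<close> by linarith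
      qed
      show ?thesis using A B ge by auto
    qed
  qed
  have big: "\<exists>i\<in>K. z$i \<ge> 1/k" if az: "ind K \<bullet> z = 1" for z
  proof (rule ccontr)
    assume "\<not> ?thesis"
    then have "\<forall>i\<in>K. z$i < 1/k" by auto
    then have "(\<Sum>i\<in>K. z$i) < (\<Sum>i\<in>K. 1/k)" using Kne by (intro sum_strict_mono) auto
    also have "\<dots> = 1" using kpos Kne by (simp add: k_def)
    finally show False using az by (simp add: ind_inner)
  qed
  have ii: "\<exists>x. Nv {} x \<le> 1 \<and> l \<le> Nv {} (x - (ind K \<bullet> x) *\<^sub>R z)" if az: "ind K \<bullet> z = 1" for z
  proof -
    obtain i where iK: "i \<in> K" and zi: "z$i \<ge> 1/k" using big[OF az] by blast
    show ?thesis using x1[OF iK] y1[OF iK az zi refl] by blast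
  qed
  have iii: "\<exists>x. Nv {} x \<le> 1 \<and> l < Nv {} (x - (ind K \<bullet> x) *\<^sub>R z)"
    if az: "ind K \<bullet> z = 1" and zM: "z \<notin> M" for z
  proof (cases "\<forall>i\<in>K. z$i = 1/k")
    case False
    have "\<exists>i\<in>K. z$i > 1/k"
    proof (rule ccontr)
      assume "\<not> ?thesis"
      then have le: "\<forall>i\<in>K. z$i \<le> 1/k" by auto
      then have "\<exists>i\<in>K. z$i < 1/k" using False by force
      then have "(\<Sum>i\<in>K. z$i) < (\<Sum>i\<in>K. 1/k)" using le by (intro sum_strict_mono_ex1) auto
      also have "\<dots> = 1" using kpos Kne by (simp add: k_def)
      finally show False using az by (simp add: ind_inner)
    qed
    then obtain i where iK: "i \<in> K" and zi: "z$i > 1/k" by blast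
    have "k \<noteq> 1"
    proof
      assume "k = 1"
      then have "card K = 1" using k_def by simp
      then have "K = {i}" using iK by (metis card_1_singletonE singletonD)
      then have "z$i = 1" using az by (simp add: ind_inner)
      then show False using zi \<open>k = 1\<close> by simp
    qed
    then show ?thesis using x1[OF iK] y1[OF iK az _ refl] zi by fastforce
  next
    case True
    then obtain j where jK: "j \<notin> K" and zj: "\<bar>z$j\<bar> > (k-2)/k^2" using zM unfolding M_def by force
    have k3': "3 \<le> k" using k3[OF jK] .
    define x where "x = (\<chi> i. if i \<in> K then 1 else if i = j then (if z$j > 0 then -1 else 1) else (0::real))"
    have xN: "Nv {} x \<le> 1" unfolding N0_le1 x_def by auto
    have s: "ind K \<bullet> x = k" unfolding ind_inner x_def k_def by simp
    have yj: "\<bar>(x - (ind K \<bullet> x) *\<^sub>R z) $ j\<bar> = 1 + k * \<bar>z$j\<bar>"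
    proof -
      have xj: "x$j = (if z$j > 0 then -1 else 1)" using jK by (simp add: x_def)
      have e: "(x - (ind K \<bullet> x) *\<^sub>R z) $ j = x$j - k * z$j" by (simp add: s)
      show ?thesis
      proof (cases "z$j > 0")
        case True
        then have kz: "0 < k * z$j" using kpos by simp
        have "\<bar>-1 - k * z$j\<bar> = 1 + k * z$j" using kz by simp
        then show ?thesis using True by (simp add: e xj s)
      next
        case False
        then have kz: "k * z$j \<le> 0" using kpos by (simp add: mult_nonneg_nonpos)
        have "\<bar>1 - k * z$j\<bar> = 1 - k * z$j" using kz by simp
        moreover have "\<bar>z$j\<bar> = - z$j" using False by simp
        ultimately show ?thesis using False by (simp add: e xj s)
      qed
    qed
    have "k * ((k-2)/k^2) < k * \<bar>z$j\<bar>" using zj kpos by (intro mult_strict_left_mono) auto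
    moreover have "k * ((k-2)/k^2) = l - 1" unfolding l_def using kpos by (simp add: field_simps power2_eq_square)
    ultimately have "l < \<bar>(x - (ind K \<bullet> x) *\<^sub>R z) $ j\<bar>" unfolding yj by linarith
    then show ?thesis using xN Nv_ge[of "x - (ind K \<bullet> x) *\<^sub>R z" j "{}"] by force
  qed
  have fw: "proj_const (Nv {}) {x. ind K \<bullet> x = 0} = l \<and> aff_dim (Pmin (Nv {}) {x. ind K \<bullet> x = 0}) = aff_dim M"
    by (rule framework[OF Nv_norm a0 Nv_bdd Msub z0M i ii iii])
  have "aff_dim M = int (card (-K))"
  proof (rule aff_dim_box[OF z0M, where c="(k-2)/k^2"])
    show "\<And>z i. z \<in> M \<Longrightarrow> i \<in> K \<Longrightarrow> z $ i = z0 $ i" unfolding M_def z0_def by auto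
    show "(k-2)/k^2 \<noteq> 0" using kk k_def by auto
    fix j assume jK: "j \<notin> K"
    have k3': "3 \<le> k" using k3[OF jK] .
    show "z0 + ((k-2)/k^2) *\<^sub>R axis j 1 \<in> M"
      unfolding M_def z0_def using jK k3' by (auto simp: axis_def)
  qed
  then show ?thesis using fw l_def k_def by simp
qed

lemma axis_inner: "axis i0 1 \<bullet> x = x$i0"
  by (simp add: cart_eq_inner_axis inner_commute)

lemma sum_axis_abs: "(\<Sum>i\<in>A. \<bar>axis j (1::real) $ i\<bar>) = (if j \<in> A then 1 else 0)"
  by (simp add: axis_def if_distrib sum.delta' cong: if_cong)

lemma mixed_constr:
  fixes i0 :: "'n::finite" and U :: "'n set"
  assumes i0U: "i0 \<notin> U" and two: "j1 \<noteq> i0"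
  shows "aff_dim (Pmin (Nv (insert i0 U)) {x. axis i0 1 \<bullet> x = 0}) = int (card U)"
proof -
  define V where "V = insert i0 U"
  define a where "a = (axis i0 1 :: real^'n)"
  have a0: "a \<noteq> 0" unfolding a_def by (simp add: axis_eq_0_iff)
  define M where "M = {z::real^'n. z$i0 = 1 \<and> (\<forall>j. j \<notin> V \<longrightarrow> z$j = 0) \<and> (\<Sum>i\<in>U. \<bar>z$i\<bar>) \<le> 1}"
  have Msub: "a \<bullet> z = 1" if "z \<in> M" for z using that unfolding M_def a_def axis_inner by simp
  have z0M: "axis i0 1 \<in> M" unfolding M_def V_def using i0U
    by (auto simp: axis_def sum.neutral)
  have sumV: "(\<Sum>i\<in>V. f i) = f i0 + (\<Sum>i\<in>U. f i)" for f :: "'n \<Rightarrow> real"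
    unfolding V_def using i0U by simp
  have i: "Nv V (x - (a \<bullet> x) *\<^sub>R z) \<le> 1" if zM: "z \<in> M" and xN: "Nv V x \<le> 1" for z x
  proof -
    let ?y = "x - (a \<bullet> x) *\<^sub>R z"
    have ax: "a \<bullet> x = x$i0" unfolding a_def axis_inner ..
    have z1: "z$i0 = 1" and zo: "\<And>j. j \<notin> V \<Longrightarrow> z$j = 0" and zs: "(\<Sum>i\<in>U. \<bar>z$i\<bar>) \<le> 1"
      using zM unfolding M_def by auto
    have "(\<Sum>i\<in>U. \<bar>?y$i\<bar>) \<le> (\<Sum>i\<in>U. \<bar>x$i\<bar> + \<bar>x$i0\<bar> * \<bar>z$i\<bar>)"
      by (rule sum_mono) (simp add: ax abs_mult[symmetric] abs_triangle_ineq4)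
    also have "\<dots> = (\<Sum>i\<in>U. \<bar>x$i\<bar>) + \<bar>x$i0\<bar> * (\<Sum>i\<in>U. \<bar>z$i\<bar>)"
      by (simp add: sum.distrib sum_distrib_left)
    also have "\<dots> \<le> (\<Sum>i\<in>U. \<bar>x$i\<bar>) + \<bar>x$i0\<bar>"
      using zs by (simp add: mult_left_le)
    also have "\<dots> = (\<Sum>i\<in>V. \<bar>x$i\<bar>)" using sumV by simp
    also have "\<dots> \<le> 1" using Nv_ge_sum[of x V] xN by linarith
    finally have SU: "(\<Sum>i\<in>U. \<bar>?y$i\<bar>) \<le> 1" .
    have y0: "?y$i0 = 0" by (simp add: ax z1)
    show ?thesis
    proof (rule Nv_le)
      show "(\<Sum>i\<in>V. \<bar>?y$i\<bar>) \<le> 1" using SU y0 sumV by simp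
      fix i
      show "\<bar>?y$i\<bar> \<le> 1"
      proof (cases "i \<in> U")
        case True
        have "\<bar>?y$i\<bar> \<le> (\<Sum>i\<in>U. \<bar>?y$i\<bar>)" using True by (intro member_le_sum) auto
        then show ?thesis using SU by linarith
      next
        case False
        show ?thesis
        proof (cases "i = i0")
          case True then show ?thesis using y0 by simp
        next
          case False
          then have "i \<notin> V" using \<open>i \<notin> U\<close> V_def by auto
          then have e: "?y$i = x$i" using zo by simp
          show ?thesis unfolding e using Nv_ge[of x i V] xN by linarith
        qed
      qed
    qed
  qed
  have ii: "\<exists>x. Nv V x \<le> 1 \<and> 1 \<le> Nv V (x - (a \<bullet> x) *\<^sub>R z)" for z
  proof (intro exI conjI)
    show "Nv V (axis j1 1) \<le> 1" by (rule Nv_le) (auto simp: sum_axis_abs axis_def)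
    have "a \<bullet> axis j1 1 = 0" unfolding a_def axis_inner using two by (simp add: axis_def)
    then show "1 \<le> Nv V (axis j1 1 - (a \<bullet> axis j1 1) *\<^sub>R z)"
      using Nv_ge[of "axis j1 (1::real)" j1 V] by simp
  qed
  have iii: "\<exists>x. Nv V x \<le> 1 \<and> 1 < Nv V (x - (a \<bullet> x) *\<^sub>R z)" if az: "a \<bullet> z = 1" and zM: "z \<notin> M" for z
  proof -
    have z1: "z$i0 = 1" using az unfolding a_def axis_inner .
    show ?thesis
    proof (cases "\<forall>j. j \<notin> V \<longrightarrow> z$j = 0")
      case False
      then obtain j where jV: "j \<notin> V" and zj: "z$j \<noteq> 0" by blast
      have ji: "j \<noteq> i0" using jV V_def by auto
      define s where "s = (if z$j > 0 then -1 else 1 :: real)"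
      define x where "x = (axis i0 1 + s *\<^sub>R axis j 1 :: real^'n)"
      have xi: "x$i = (if i = i0 then 1 else if i = j then s else 0)" for i
        unfolding x_def using ji by (simp add: axis_def)
      have xN: "Nv V x \<le> 1"
      proof (rule Nv_le)
        have "(\<Sum>i\<in>V. \<bar>x$i\<bar>) = (\<Sum>i\<in>V. \<bar>axis i0 (1::real) $ i\<bar>)"
          using jV by (intro sum.cong) (auto simp: xi axis_def)
        also have "\<dots> = 1" by (simp add: sum_axis_abs V_def)
        finally show "(\<Sum>i\<in>V. \<bar>x$i\<bar>) \<le> 1" by simp
        show "\<bar>x$i\<bar> \<le> 1" for i by (simp add: xi s_def)
      qed
      have ax: "a \<bullet> x = 1" unfolding a_def axis_inner by (simp add: xi)
      have "\<bar>(x - (a \<bullet> x) *\<^sub>R z)$j\<bar> = 1 + \<bar>z$j\<bar>"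
        using zj ji by (auto simp: ax xi s_def)
      then have "1 < \<bar>(x - (a \<bullet> x) *\<^sub>R z)$j\<bar>" using zj by simp
      then show ?thesis using xN Nv_ge[of "x - (a \<bullet> x) *\<^sub>R z" j V] by force
    next
      case True
      then have zs: "(\<Sum>i\<in>U. \<bar>z$i\<bar>) > 1" using zM z1 unfolding M_def by auto
      have xN: "Nv V (axis i0 1) \<le> 1" by (rule Nv_le) (auto simp: sum_axis_abs axis_def)
      have ax: "a \<bullet> axis i0 1 = 1" unfolding a_def axis_inner by (simp add: axis_def)
      have "(\<Sum>i\<in>U. \<bar>z$i\<bar>) = (\<Sum>i\<in>U. \<bar>(axis i0 1 - (a \<bullet> axis i0 1) *\<^sub>R z)$i\<bar>)"
        using i0U unfolding ax by (intro sum.cong) (auto simp: axis_def)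
      also have "\<dots> \<le> (\<Sum>i\<in>V. \<bar>(axis i0 1 - (a \<bullet> axis i0 1) *\<^sub>R z)$i\<bar>)" using sumV by simp
      also have "\<dots> \<le> Nv V (axis i0 1 - (a \<bullet> axis i0 1) *\<^sub>R z)" by (rule Nv_ge_sum)
      finally show ?thesis using xN zs by force
    qed
  qed
  have fw: "proj_const (Nv V) {x. a \<bullet> x = 0} = 1 \<and> aff_dim (Pmin (Nv V) {x. a \<bullet> x = 0}) = aff_dim M"
    by (rule framework[OF Nv_norm a0 Nv_bdd Msub z0M i ii iii])
  have "aff_dim M = int (card (-(-U)))"
  proof (rule aff_dim_box[OF z0M, where c=1])
    show "\<And>z i. z \<in> M \<Longrightarrow> i \<in> -U \<Longrightarrow> z $ i = axis i0 1 $ i"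
      unfolding M_def V_def by (auto simp: axis_def)
    fix j assume "j \<notin> -U"
    then have jU: "j \<in> U" by simp
    then have ji: "j \<noteq> i0" using i0U by auto
    have "(\<Sum>i\<in>U. \<bar>(axis i0 1 + 1 *\<^sub>R axis j 1) $ i\<bar>) = (\<Sum>i\<in>U. \<bar>axis j (1::real) $ i\<bar>)"
      using i0U by (intro sum.cong) (auto simp: axis_def)
    also have "\<dots> = 1" using jU by (simp add: sum_axis_abs)
    finally show "axis i0 1 + 1 *\<^sub>R axis j 1 \<in> M"
      unfolding M_def V_def using ji jU by (auto simp: axis_def)
  qed simp
  then show ?thesis using fw unfolding V_def a_def by simp
qed

lemma card_Compl_fin: "card (- (K::'n::finite set)) = CARD('n) - card K"
proof -
  have "- K = UNIV - K" by auto
  then show ?thesis by (simp add: card_Diff_subset)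
qed

lemma hyp_facts:
  fixes a :: "real^'n::finite" assumes "a \<noteq> 0"
  shows "subspace {x. a \<bullet> x = 0} \<and> dim {x. a \<bullet> x = 0} = CARD('n) - 1"
  using dim_hyperplane[OF assms] subspace_hyperplane[of a] by simp

theorem mainTheorem4:
  fixes m :: nat
  assumes "m < CARD('n::finite)"
  shows "(\<exists>(N :: real^'n \<Rightarrow> real) (Y :: (real^'n) set).
            is_norm N \<and> subspace Y \<and> dim Y = CARD('n) - 1 \<and>
            aff_dim (Pmin N Y) = int m)
       \<and> (m + 3 \<le> CARD('n) \<longrightarrow>
          (\<exists>(N :: real^'n \<Rightarrow> real) (Y :: (real^'n) set).
            is_norm N \<and> subspace Y \<and> dim Y = CARD('n) - 1 \<and>
            aff_dim (Pmin N Y) = int m \<and> proj_const N Y > 1))"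
proof
  show "\<exists>(N :: real^'n \<Rightarrow> real) (Y :: (real^'n) set).
            is_norm N \<and> subspace Y \<and> dim Y = CARD('n) - 1 \<and> aff_dim (Pmin N Y) = int m"
  proof (cases "CARD('n) = 1")
    case True
    then have m0: "m = 0" using assms by simp
    have "ind (UNIV::'n set) \<noteq> 0"
      by (simp add: ind_def vec_eq_iff)
    moreover have "3 \<le> card (UNIV::'n set) \<or> (UNIV = (UNIV::'n set) \<and> card (UNIV::'n set) = 1)"
      using True by simp
    note L = linf_constr[OF this]
    ultimately show ?thesis using hyp_facts[of "ind (UNIV::'n set)"] Nv_norm[of "{}::'n set"] m0
      by (intro exI[of _ "Nv ({}::'n set)"] exI[of _ "{x. ind (UNIV::'n set) \<bullet> x = 0}"]) simp
  next
    case False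
    obtain i0 :: 'n where True by simp
    have "\<exists>j::'n. j \<noteq> i0"
    proof (rule ccontr)
      assume "\<not> (\<exists>j::'n. j \<noteq> i0)"
      then have "(UNIV::'n set) = {i0}" by auto
      then have "CARD('n) = card {i0}" by (simp only:)
      then show False using False by simp
    qed
    then obtain j1 :: 'n where j1: "j1 \<noteq> i0" by blast
    have "m \<le> card (- {i0})" using assms card_Compl_fin[of "{i0}"] by simp
    then obtain U where U: "U \<subseteq> - {i0}" "card U = m" "finite U" by (rule obtain_subset_with_card_n)
    have i0U: "i0 \<notin> U" using U by auto
    have a0: "axis i0 (1::real) \<noteq> 0" by (simp add: axis_eq_0_iff)
    show ?thesis using mixed_constr[OF i0U j1] hyp_facts[OF a0] Nv_norm[of "insert i0 U"] U
      by (intro exI[of _ "Nv (insert i0 U)"] exI[of _ "{x. axis i0 1 \<bullet> x = 0}"]) simp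
  qed
next
  show "m + 3 \<le> CARD('n) \<longrightarrow>
          (\<exists>(N :: real^'n \<Rightarrow> real) (Y :: (real^'n) set).
            is_norm N \<and> subspace Y \<and> dim Y = CARD('n) - 1 \<and>
            aff_dim (Pmin N Y) = int m \<and> proj_const N Y > 1)"
  proof
    assume h: "m + 3 \<le> CARD('n)"
    have "CARD('n) - m \<le> card (UNIV::'n set)" by simp
    then obtain K :: "'n set" where "K \<subseteq> UNIV" and K: "card K = CARD('n) - m" and "finite K"
      by (rule obtain_subset_with_card_n)
    have k3: "3 \<le> card K" using K h by simp
    then have Kne: "K \<noteq> {}" by auto
    then have a0: "ind K \<noteq> 0" by (auto simp: ind_def vec_eq_iff)
    have cK: "card (-K) = m" using card_Compl_fin[of K] K h by simp
    have L: "proj_const (Nv ({}::'n set)) {x. ind K \<bullet> x = 0} = 2 - 2 / real (card K)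
       \<and> aff_dim (Pmin (Nv ({}::'n set)) {x. ind K \<bullet> x = 0}) = int (card (-K))"
      using linf_constr k3 by blast
    have gt: "2 - 2 / real (card K) > 1" using k3 by (simp add: field_simps)
    show "\<exists>(N :: real^'n \<Rightarrow> real) (Y :: (real^'n) set).
            is_norm N \<and> subspace Y \<and> dim Y = CARD('n) - 1 \<and>
            aff_dim (Pmin N Y) = int m \<and> proj_const N Y > 1"
      using L gt cK hyp_facts[OF a0] Nv_norm[of "{}::'n set"]
      by (intro exI[of _ "Nv ({}::'n set)"] exI[of _ "{x. ind K \<bullet> x = 0}"]) simp
  qed
qed

end
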